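(* For every finite point set $S$ in the plane, the (unordered) pairs of points of $S$ can be $2$-colored such that every axis-parallel rectangle that contains at least $3$ points of $S$ contains pairs of points of $S$ of both colors.
   Context: An axis-parallel rectangle is a set $[a,b]\times[c,d]$. A rectangle contains a pair if it contains both of its points. *)

theory Defs
  imports Main "HOL.Real"
begin

definition rect :: "real \<Rightarrow> real \<Rightarrow> real \<Rightarrow> real \<Rightarrow> (real \<times> real) set" where
  "rect a b c d = {a..b} \<times> {c..d}"

end

theory Submission
  imports Defs
begin

definition lx1 :: "real \<times> real \<Rightarrow> real \<times> real \<Rightarrow> bool" where
  "lx1 p q = (fst p < fst q \<or> (fst p = fst q \<and> snd p < snd q))"
definition lx2 :: "real \<times> real \<Rightarrow> real \<times> real \<Rightarrow> bool" where
  "lx2 p q = (snd p < snd q \<or> (snd p = snd q \<and> fst p < fst q))"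
definition cmp :: "real \<times> real \<Rightarrow> real \<times> real \<Rightarrow> bool" where
  "cmp p q = (lx1 p q = lx2 p q)"
definition btw :: "real \<times> real \<Rightarrow> real \<times> real \<Rightarrow> real \<times> real \<Rightarrow> bool" where
  "btw s p q = ((lx1 p s \<and> lx1 s q \<or> lx1 q s \<and> lx1 s p) \<and>
                (lx2 p s \<and> lx2 s q \<or> lx2 q s \<and> lx2 s p))"
definition BB :: "(real \<times> real) set \<Rightarrow> real \<times> real \<Rightarrow> real \<times> real \<Rightarrow> (real \<times> real) set" where
  "BB S p q = {s \<in> S. btw s p q}"
definition good :: "(real \<times> real) set \<Rightarrow> real \<times> real \<Rightarrow> real \<times> real \<Rightarrow> bool" where
  "good S p q = (BB S p q = {} \<longleftrightarrow> cmp p q)"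

lemma cmp_sym: "p \<noteq> q \<Longrightarrow> cmp q p = cmp p q"
  unfolding cmp_def lx1_def lx2_def by (cases p; cases q) auto

lemma btw_sym: "btw s q p = btw s p q"
  unfolding btw_def by blast

lemma BB_sym: "BB S q p = BB S p q"
  unfolding BB_def using btw_sym by blast

lemma good_sym: "p \<noteq> q \<Longrightarrow> good S q p = good S p q"
  unfolding good_def using BB_sym cmp_sym by metis

lemma btw_strict: "btw s p q \<Longrightarrow> s \<noteq> p \<and> s \<noteq> q"
  unfolding btw_def lx1_def by auto

lemma btw_rect: "p \<in> rect a b c d \<Longrightarrow> q \<in> rect a b c d \<Longrightarrow> btw s p q \<Longrightarrow> s \<in> rect a b c d"
  unfolding btw_def lx1_def lx2_def rect_def
  unfolding mem_Times_iff atLeastAtMost_iff by smt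

lemma btw_trans: "btw s p q \<Longrightarrow> btw t p s \<Longrightarrow> btw t p q"
  unfolding btw_def lx1_def lx2_def by smt

lemma cmp_btw: "btw s p q \<Longrightarrow> cmp p s = cmp p q"
  unfolding btw_def cmp_def lx1_def lx2_def by smt

lemma L3: "a \<noteq> b \<Longrightarrow> b \<noteq> c \<Longrightarrow> a \<noteq> c \<Longrightarrow> cmp a b = cmp b c \<Longrightarrow> cmp a c = cmp b c \<Longrightarrow>
   btw a b c \<or> btw b a c \<or> btw c a b"
  unfolding btw_def cmp_def lx1_def lx2_def prod_eq_iff
  by smt


lemma descend:
  assumes fin: "finite S" and "p \<in> T" "q \<in> T" "p \<noteq> q"
    and TT: "\<forall>x y s. x \<in> T \<longrightarrow> y \<in> T \<longrightarrow> s \<in> S \<longrightarrow> btw s x y \<longrightarrow> s \<in> T"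
  shows "\<exists>p' q'. p' \<in> T \<and> q' \<in> T \<and> p' \<noteq> q' \<and> cmp p' q' = cmp p q \<and> BB S p' q' = {}"
  using assms
proof (induction "card (BB S p q)" arbitrary: q rule: less_induct)
  case less
  show ?case
  proof (cases "BB S p q = {}")
    case True then show ?thesis using less.prems by blast
  next
    case False then obtain s where s: "s \<in> S" "btw s p q" unfolding BB_def by auto
    have sT: "s \<in> T" using less.prems s by blast
    have sp: "p \<noteq> s" using btw_strict s by blast
    have sub: "BB S p s \<subseteq> BB S p q - {s}"
      unfolding BB_def using btw_trans[OF s(2)] btw_strict by blast
    have finB: "finite (BB S p q)" using fin unfolding BB_def by auto
    have sB: "s \<in> BB S p q" using s unfolding BB_def by auto
    have "card (BB S p s) < card (BB S p q)"
      by (rule psubset_card_mono[OF finB]) (use sub sB in blast)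
    from less.hyps[OF this fin less.prems(2) sT sp TT]
    show ?thesis using cmp_btw[OF s(2)] by auto
  qed
qed

definition colr :: "(real \<times> real) set \<Rightarrow> (real \<times> real) set \<Rightarrow> bool" where
  "colr S X = (\<exists>p q. X = {p, q} \<and> p \<noteq> q \<and> good S p q)"

lemma colr_iff: "p \<noteq> q \<Longrightarrow> colr S {p, q} = good S p q"
  unfolding colr_def using good_sym by (metis doubleton_eq_iff)

lemma three: "card (T::'a set) \<ge> 3 \<Longrightarrow> \<exists>x y z. x \<in> T \<and> y \<in> T \<and> z \<in> T \<and> x \<noteq> y \<and> y \<noteq> z \<and> x \<noteq> z"
  by (auto simp: numeral_3_eq_3 card_le_Suc_iff)

theorem theorem10:
  fixes S :: "(real \<times> real) set"
  assumes "finite S"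
  shows "\<exists>col :: (real \<times> real) set \<Rightarrow> bool.
           \<forall>a b c d. card (S \<inter> rect a b c d) \<ge> 3 \<longrightarrow>
             (\<exists>p \<in> S \<inter> rect a b c d. \<exists>q \<in> S \<inter> rect a b c d. p \<noteq> q \<and> col {p, q}) \<and>
             (\<exists>p \<in> S \<inter> rect a b c d. \<exists>q \<in> S \<inter> rect a b c d. p \<noteq> q \<and> \<not> col {p, q})"
proof (intro exI allI impI)
  fix a b c d
  define T where "T = S \<inter> rect a b c d"
  assume "card (S \<inter> rect a b c d) \<ge> 3"
  then obtain x y z where xyz: "x \<in> T" "y \<in> T" "z \<in> T" "x \<noteq> y" "y \<noteq> z" "x \<noteq> z"
    using three unfolding T_def by blast
  have TT: "\<forall>x y s. x \<in> T \<longrightarrow> y \<in> T \<longrightarrow> s \<in> S \<longrightarrow> btw s x y \<longrightarrow> s \<in> T"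
    unfolding T_def using btw_rect by blast
  have TS: "T \<subseteq> S" unfolding T_def by auto
  have mid: "\<exists>u\<in>T. \<exists>v\<in>T. u \<noteq> v \<and> cmp u v = cmp y z \<and> BB S u v \<noteq> {}"
    if "cmp x y = cmp y z" "cmp x z = cmp y z"
  proof -
    from L3[OF xyz(4-6) that] consider "btw x y z" | "btw y x z" | "btw z x y" by blast
    then show ?thesis
    proof cases
      case 1 then show ?thesis using xyz TS unfolding BB_def by blast
    next
      case 2 then show ?thesis using xyz TS that unfolding BB_def by blast
    next
      case 3 then show ?thesis using xyz TS that unfolding BB_def by blast
    qed
  qed
  have P1: "\<exists>p\<in>T. \<exists>q\<in>T. p \<noteq> q \<and> good S p q"
  proof (cases "\<exists>p\<in>T. \<exists>q\<in>T. p \<noteq> q \<and> cmp p q")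
    case True
    then obtain p q where "p \<in> T" "q \<in> T" "p \<noteq> q" "cmp p q" by blast
    from descend[OF assms this(1-3) TT] this(4) show ?thesis unfolding good_def by metis
  next
    case False
    then have "\<not> cmp x y" "\<not> cmp y z" "\<not> cmp x z" using xyz by auto
    with mid show ?thesis unfolding good_def by metis
  qed
  have P2: "\<exists>p\<in>T. \<exists>q\<in>T. p \<noteq> q \<and> \<not> good S p q"
  proof (cases "\<exists>p\<in>T. \<exists>q\<in>T. p \<noteq> q \<and> \<not> cmp p q")
    case True
    then obtain p q where "p \<in> T" "q \<in> T" "p \<noteq> q" "\<not> cmp p q" by blast
    from descend[OF assms this(1-3) TT] this(4) show ?thesis unfolding good_def by metis
  next
    case False
    then have "cmp x y" "cmp y z" "cmp x z" using xyz by auto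
    with mid show ?thesis unfolding good_def by metis
  qed
  show "(\<exists>p \<in> S \<inter> rect a b c d. \<exists>q \<in> S \<inter> rect a b c d. p \<noteq> q \<and> colr S {p, q}) \<and>
        (\<exists>p \<in> S \<inter> rect a b c d. \<exists>q \<in> S \<inter> rect a b c d. p \<noteq> q \<and> \<not> colr S {p, q})"
    using P1 P2 colr_iff unfolding T_def by metis
qed

end
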